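(* Let $0<q,r<\infty$ and let $u,v,w$ be weights on $(0,\infty)$. Let $\{x_k\}$ be the covering sequence associated with $u$ and $\mathcal Z$ its index set (as described in the context). Then $$\bigg( \int_0^{\infty} \bigg( \int_x^{\infty} \bigg( \int_t^{\infty} h \bigg)^q w(t)\,dt\bigg)^{r / q} u(x)\,dx \bigg)^{1/r} \approx \bigg\| \bigg\{ 2^{k / r} \bigg(\int_{x_k}^{x_{k+1}} \bigg( \int_s^{x_{k+1}} h \bigg)^q w(s)\,ds\bigg)^{ 1 / q} \bigg\} \bigg\|_{\ell^r(\mathcal Z)} + \bigg( \int_0^{\infty} u(t) \sup_{t < s} \bigg(\int_t^s w \bigg)^{r / q} \bigg( \int_s^{\infty} h\bigg)^r \,dt\bigg)^{1/r}$$ with constants independent of $h\in\mathfrak M^+(0,\infty)$.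
   Context: $\mathfrak M^+(0,\infty)$: non-negative measurable functions on $(0,\infty)$. A weight is $v\in\mathfrak M^+(0,\infty)$ with $0<\int_0^x v<\infty$ for all $x>0$. Covering sequence: if $\int_0^\infty u=\infty$, $\{x_k\}_{k\in\mathbb Z}$ is the strictly increasing sequence with $\int_0^{x_k}u=2^k$, and $\mathcal Z=\mathbb Z$. If $\int_0^\infty u<\infty$, let $M\in\mathbb Z$ satisfy $2^M\le\int_0^\infty u<2^{M+1}$, let $\int_0^{x_k}u=2^k$ for $k\le M$, $x_{M+1}=\infty$, and $\mathcal Z=\{k\in\mathbb Z: k\le M\}$. For a sequence $\{a_k\}_{k\in\mathcal Z}$, $\|\{a_k\}\|_{\ell^r(\mathcal Z)}=(\sum_{k\in\mathcal Z}|a_k|^r)^{1/r}$. $A\approx B$ means two-sided inequality with constants depending only on $q,r$. *)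

theory Defs
  imports "HOL-Analysis.Analysis"
begin

definition enn_powr :: "ennreal \<Rightarrow> real \<Rightarrow> ennreal" (infixr "powe" 80) where
  "x powe p = (if x = top then (if 0 < p then top else if p = 0 then 1 else 0)
               else ennreal (enn2real x powr p))"

definition is_weight :: "(real \<Rightarrow> real) \<Rightarrow> bool" where
  "is_weight v \<longleftrightarrow> v \<in> borel_measurable borel \<and> (\<forall>t>0. 0 \<le> v t) \<and>
     (\<forall>x>0. 0 < (\<integral>\<^sup>+ t\<in>{0<..<x}. ennreal (v t) \<partial>lborel) \<and>
            (\<integral>\<^sup>+ t\<in>{0<..<x}. ennreal (v t) \<partial>lborel) < top)"

definition nonneg_meas :: "(real \<Rightarrow> real) \<Rightarrow> bool" where
  "nonneg_meas h \<longleftrightarrow> h \<in> borel_measurable borel \<and> (\<forall>t>0. 0 \<le> h t)"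

definition covering_seq :: "(real \<Rightarrow> real) \<Rightarrow> int set \<Rightarrow> (int \<Rightarrow> ereal) \<Rightarrow> bool" where
  "covering_seq u Z x \<longleftrightarrow>
     (\<forall>k\<in>Z. 0 < x k \<and> x k < \<infinity> \<and>
        (\<integral>\<^sup>+ t\<in>{t. 0 < t \<and> ereal t < x k}. ennreal (u t) \<partial>lborel) = ennreal (2 powi k)) \<and>
     (\<forall>j\<in>Z. \<forall>k\<in>Z. j < k \<longrightarrow> x j < x k) \<and>
     (if (\<integral>\<^sup>+ t\<in>{0<..}. ennreal (u t) \<partial>lborel) = top then Z = UNIV
      else (\<exists>M::int. ennreal (2 powi M) \<le> (\<integral>\<^sup>+ t\<in>{0<..}. ennreal (u t) \<partial>lborel) \<and>
              (\<integral>\<^sup>+ t\<in>{0<..}. ennreal (u t) \<partial>lborel) < ennreal (2 powi (M + 1)) \<and>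
              Z = {k. k \<le> M} \<and> x (M + 1) = \<infinity>))"

end

theory Submission
  imports Defs
begin



lemma powe_top[simp]: "0 < p \<Longrightarrow> top powe p = top"
  by (simp add: enn_powr_def)

lemma powe_fin: "x \<noteq> top \<Longrightarrow> x powe p = ennreal (enn2real x powr p)"
  by (simp add: enn_powr_def)

lemma powe_ennreal: "0 \<le> c \<Longrightarrow> ennreal c powe p = ennreal (c powr p)"
  by (simp add: enn_powr_def)

lemma powe_zero[simp]: "0 < p \<Longrightarrow> 0 powe p = 0"
  by (simp add: enn_powr_def)

lemma powe_one[simp]: "a powe 1 = a"
  by (cases a) (auto simp: enn_powr_def)

lemma powe_mono: assumes "a \<le> b" "0 < p" shows "a powe p \<le> b powe p"
proof (cases "b = top")
  case True then show ?thesis using assms by (simp add: enn_powr_def)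
next
  case False
  then have "a \<noteq> top" using assms top_unique by auto
  then show ?thesis using False assms
    by (auto simp: enn_powr_def top.not_eq_extremum intro!: ennreal_leI powr_mono2 enn2real_mono)
qed

lemma powe_pos: "0 < p \<Longrightarrow> 0 < a \<Longrightarrow> 0 < a powe p"
  by (cases "a = top") (auto simp: enn_powr_def enn2real_eq_0_iff)

lemma powe_eq_0_iff: "0 < p \<Longrightarrow> a powe p = 0 \<longleftrightarrow> a = 0"
  by (metis not_gr_zero powe_pos powe_zero)

lemma powe_mult: assumes "0 < p" shows "(a * b) powe p = a powe p * b powe p"
proof -
  consider "a = 0" | "b = 0" | "a = top" "b \<noteq> 0" | "b = top" "a \<noteq> 0" | "a \<noteq> top" "b \<noteq> top" "a\<noteq>0" "b\<noteq>0"
    by blast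
  then show ?thesis
  proof cases
    case 3 then have "0 < b powe p" using assms by (intro powe_pos) (auto simp: zero_less_iff_neq_zero)
    then show ?thesis using 3 assms by (simp add: ennreal_mult_top ennreal_top_mult)
  next
    case 4 then have "0 < a powe p" using assms by (intro powe_pos) (auto simp: zero_less_iff_neq_zero)
    then show ?thesis using 4 assms by (simp add: ennreal_mult_top ennreal_top_mult)
  next
    case 5 then show ?thesis using assms
      by (simp add: enn_powr_def ennreal_mult_eq_top_iff enn2real_mult powr_mult ennreal_mult'')
  qed (use assms in auto)
qed

lemma powe_powe: assumes "0 < p" "0 < s" shows "(a powe p) powe s = a powe (p * s)"
  by (cases "a = top") (use assms in \<open>auto simp: enn_powr_def powr_powr\<close>)

lemma powe_max: "0 < p \<Longrightarrow> (max a b) powe p = max (a powe p) (b powe p)"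
  by (metis max.absorb1 max.absorb2 nle_le powe_mono)

lemma powe_add_le: assumes "0 < p" shows "(a + b) powe p \<le> 2 powe p * (a powe p + b powe p)"
proof -
  have "(a + b) powe p \<le> (2 * max a b) powe p"
    by (intro powe_mono assms) (metis add_mono max.cobounded1 max.cobounded2 mult_2)
  also have "\<dots> = 2 powe p * max (a powe p) (b powe p)"
    using assms by (simp add: powe_mult powe_max)
  also have "\<dots> \<le> 2 powe p * (a powe p + b powe p)"
    by (intro mult_left_mono) (auto simp: max_def add_increasing add_increasing2)
  finally show ?thesis .
qed

lemma powe_inv: assumes "0 < p" shows "(a powe p) powe (1/p) = a"
  using powe_powe[of p "1/p" a] assms by simp

lemma powe_le_root: assumes "a powe p \<le> b" "0 < p" shows "a \<le> b powe (1/p)"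
proof -
  have "a = (a powe p) powe (1/p)" using powe_inv assms by simp
  also have "\<dots> \<le> b powe (1/p)" using assms by (intro powe_mono) auto
  finally show ?thesis .
qed




lemma antimono_borel_ennreal:
  fixes F :: "real \<Rightarrow> ennreal"
  assumes "\<And>a b. a \<le> b \<Longrightarrow> F b \<le> F a"
  shows "F \<in> borel_measurable borel"
proof (rule borel_measurableI_greater)
  fix y
  have "is_interval {x. y < F x}"
    unfolding is_interval_1 using assms by (auto intro: less_le_trans)
  then show "{x \<in> space borel. y < F x} \<in> sets borel"
    using real_interval_borel_measurable by simp
qed

lemma sum_disj_le:
  fixes g :: "'i \<Rightarrow> 'a \<Rightarrow> ennreal"
  assumes "countable I" "\<And>i. i \<in> I \<Longrightarrow> g i \<in> borel_measurable M"
    and disj: "\<And>y i j. y \<in> space M \<Longrightarrow> i \<in> I \<Longrightarrow> j \<in> I \<Longrightarrow> i \<noteq> j \<Longrightarrow> g i y = 0 \<or> g j y = 0"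
    and le: "\<And>y i. y \<in> space M \<Longrightarrow> i \<in> I \<Longrightarrow> g i y \<le> f y"
  shows "(\<integral>\<^sup>+i. (\<integral>\<^sup>+y. g i y \<partial>M) \<partial>count_space I) \<le> (\<integral>\<^sup>+y. f y \<partial>M)"
proof -
  have "(\<integral>\<^sup>+i. (\<integral>\<^sup>+y. g i y \<partial>M) \<partial>count_space I) = (\<integral>\<^sup>+y. (\<integral>\<^sup>+i. g i y \<partial>count_space I) \<partial>M)"
    using assms by (subst nn_integral_count_space_nn_integral) auto
  also have "\<dots> \<le> (\<integral>\<^sup>+y. f y \<partial>M)"
  proof (rule nn_integral_mono)
    fix y assume y: "y \<in> space M"
    show "(\<integral>\<^sup>+i. g i y \<partial>count_space I) \<le> f y"
    proof (cases "\<exists>i0\<in>I. g i0 y \<noteq> 0")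
      case True
      then obtain i0 where i0: "i0 \<in> I" "g i0 y \<noteq> 0" by blast
      have "(\<integral>\<^sup>+i. g i y \<partial>count_space I) = (\<Sum>i\<in>{i0}. g i y)"
        using disj[OF y _ i0(1)] i0 by (intro nn_integral_count_space') auto
      then show ?thesis using le[OF y i0(1)] by simp
    next
      case False
      then have "(\<integral>\<^sup>+i. g i y \<partial>count_space I) = (\<integral>\<^sup>+i. 0 \<partial>count_space I)"
        by (intro nn_integral_cong) auto
      then show ?thesis by simp
    qed
  qed
  finally show ?thesis .
qed

lemma cover_le_sum:
  fixes g :: "'i \<Rightarrow> 'a \<Rightarrow> ennreal"
  assumes "countable I" "\<And>i. i \<in> I \<Longrightarrow> g i \<in> borel_measurable M"
    and cov: "\<And>y. y \<in> space M \<Longrightarrow> f y \<le> (\<integral>\<^sup>+i. g i y \<partial>count_space I)"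
  shows "(\<integral>\<^sup>+y. f y \<partial>M) \<le> (\<integral>\<^sup>+i. (\<integral>\<^sup>+y. g i y \<partial>M) \<partial>count_space I)"
proof -
  have "(\<integral>\<^sup>+y. f y \<partial>M) \<le> (\<integral>\<^sup>+y. (\<integral>\<^sup>+i. g i y \<partial>count_space I) \<partial>M)"
    using cov by (intro nn_integral_mono) auto
  also have "\<dots> = (\<integral>\<^sup>+i. (\<integral>\<^sup>+y. g i y \<partial>M) \<partial>count_space I)"
    using assms by (subst nn_integral_count_space_nn_integral) auto
  finally show ?thesis .
qed

lemma geom_nat: assumes "0 \<le> c" "c < 1"
  shows "(\<integral>\<^sup>+m. ennreal (c ^ m) \<partial>count_space (UNIV::nat set)) = ennreal (1 / (1 - c))"
  using assms by (simp add: nn_integral_count_space_nat suminf_ennreal2 summable_geometric suminf_geometric)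

lemma geom_up: assumes "0 \<le> c" "c < 1"
  shows "(\<integral>\<^sup>+j. ennreal (c ^ nat (j - k)) \<partial>count_space {j::int. k \<le> j}) = ennreal (1 / (1 - c))"
proof -
  have "bij_betw (\<lambda>m::nat. k + int m) UNIV {j. k \<le> j}"
    by (rule bij_betwI[where g="\<lambda>j. nat (j - k)"]) auto
  from nn_integral_bij_count_space[OF this, of "\<lambda>j. ennreal (c ^ nat (j - k))"]
  show ?thesis using geom_nat[OF assms] by simp
qed

lemma geom_down: assumes "0 \<le> c" "c < 1"
  shows "(\<integral>\<^sup>+j. ennreal (c ^ nat (k - j)) \<partial>count_space {j::int. j \<le> k}) = ennreal (1 / (1 - c))"
proof -
  have "bij_betw (\<lambda>m::nat. k - int m) UNIV {j. j \<le> k}"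
    by (rule bij_betwI[where g="\<lambda>j. nat (k - j)"]) auto
  from nn_integral_bij_count_space[OF this, of "\<lambda>j. ennreal (c ^ nat (k - j))"]
  show ?thesis using geom_nat[OF assms] by simp
qed




lemma powi_split: "k \<le> i \<Longrightarrow> (2::real) powi k * 2 ^ nat (i - k) = 2 powi i"
proof -
  assume "k \<le> i"
  then have "i = k + int (nat (i - k))" by simp
  then have "(2::real) powi i = 2 powi k * 2 powi int (nat (i - k))"
    by (metis power_int_add zero_neq_numeral)
  then show ?thesis using \<open>k \<le> i\<close> by (simp add: power_int_def)
qed

lemma count_restrict:
  "(\<integral>\<^sup>+i. g i \<partial>count_space {i\<in>Z. P i}) = (\<integral>\<^sup>+i. (if P i then g i else 0) \<partial>count_space Z)"
proof -
  have "(\<integral>\<^sup>+i. g i \<partial>count_space {i\<in>Z. P i}) = (\<integral>\<^sup>+i. (if P i then g i else 0) \<partial>count_space {i\<in>Z. P i})"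
    by (intro nn_integral_cong) auto
  also have "\<dots> = (\<integral>\<^sup>+i. (if P i then g i else 0) \<partial>count_space Z)"
    by (intro nn_integral_count_space_eq) auto
  finally show ?thesis .
qed

lemma count_mono_set: "A \<subseteq> B \<Longrightarrow> (\<integral>\<^sup>+i. g i \<partial>count_space A) \<le> (\<integral>\<^sup>+i. g i \<partial>count_space B)"
  by (auto simp: nn_integral_count_space_indicator intro!: nn_integral_mono split: split_indicator)

lemma powr_lt1: "0 \<le> (x::real) \<Longrightarrow> x < 1 \<Longrightarrow> 0 < a \<Longrightarrow> x powr a < 1"
  using powr_less_mono2[of a x 1] by simp

definition "gK p = (1 / (1 - (1 / sqrt 2) powr (1/p))) powr p * (1 / (1 - 1 / sqrt 2))"

lemma gK_pos: "0 < p \<Longrightarrow> 0 < gK p"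
proof -
  assume p: "0 < p"
  have "(1 / sqrt 2) powr (1/p) < 1" using p by (intro powr_lt1) auto
  moreover have "1 / sqrt 2 < (1::real)" by (simp add: field_simps)
  ultimately show ?thesis unfolding gK_def by (auto intro!: mult_pos_pos divide_pos_pos)
qed

lemma geom_ineq:
  fixes a :: "int \<Rightarrow> ennreal" and Z :: "int set"
  assumes p: "0 < p"
  shows "(\<integral>\<^sup>+k. ennreal (2 powi k) * (\<integral>\<^sup>+j. a j \<partial>count_space {j\<in>Z. k \<le> j}) powe p \<partial>count_space Z)
     \<le> ennreal (gK p) * (\<integral>\<^sup>+j. ennreal (2 powi j) * a j powe p \<partial>count_space Z)"
proof -
  define \<rho> :: real where "\<rho> = sqrt 2"
  have \<rho>: "1 < \<rho>" "\<rho> * \<rho> = 2" by (auto simp: \<rho>_def)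
  define d where "d = (1 / \<rho>) powr (1/p)"
  have d: "0 \<le> d" "d < 1" using p \<rho> unfolding d_def by (auto intro!: powr_lt1)
  define G where "G = 1 / (1 - d)"
  define S where "S k = (\<integral>\<^sup>+i. a i powe p * ennreal (\<rho> ^ nat (i - k)) \<partial>count_space {i\<in>Z. k \<le> i})" for k
  have step1: "(\<integral>\<^sup>+j. a j \<partial>count_space {j\<in>Z. k \<le> j}) powe p \<le> S k * ennreal (G powr p)" for k
  proof -
    have aj: "a j \<le> S k powe (1/p) * ennreal (d ^ nat (j - k))" if j: "j \<in> {j\<in>Z. k \<le> j}" for j
    proof -
      let ?n = "nat (j - k)"
      have "a j powe p * ennreal (\<rho> ^ ?n) \<le> S k"
        unfolding S_def by (rule nn_integral_ge_point[OF j])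
      then have "a j powe p * ennreal (\<rho> ^ ?n) * ennreal ((1/\<rho>) ^ ?n) \<le> S k * ennreal ((1/\<rho>) ^ ?n)"
        by (rule mult_right_mono) simp
      moreover have "ennreal (\<rho> ^ ?n) * ennreal ((1/\<rho>) ^ ?n) = 1"
        using \<rho> by (simp add: ennreal_mult''[symmetric] power_mult_distrib[symmetric])
      ultimately have "a j powe p \<le> S k * ennreal ((1/\<rho>) ^ ?n)"
        by (simp add: mult.assoc)
      then have "a j \<le> (S k * ennreal ((1/\<rho>) ^ ?n)) powe (1/p)"
        using p by (rule powe_le_root)
      also have "\<dots> = S k powe (1/p) * ennreal (d ^ ?n)"
      proof -
        have "((1/\<rho>) ^ ?n) powr (1/p) = d ^ ?n"
          using \<rho> unfolding d_def
          by (simp add: powr_realpow[symmetric] powr_powr powr_power mult_ac)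
        then show ?thesis using p \<rho> by (simp add: powe_mult powe_ennreal)
      qed
      finally show ?thesis .
    qed
    have "(\<integral>\<^sup>+j. a j \<partial>count_space {j\<in>Z. k \<le> j}) \<le> (\<integral>\<^sup>+j. S k powe (1/p) * ennreal (d ^ nat (j - k)) \<partial>count_space {j\<in>Z. k \<le> j})"
      using aj by (intro nn_integral_mono) auto
    also have "\<dots> \<le> (\<integral>\<^sup>+j. S k powe (1/p) * ennreal (d ^ nat (j - k)) \<partial>count_space {j. k \<le> j})"
      by (intro count_mono_set) auto
    also have "\<dots> = S k powe (1/p) * ennreal G"
      using d by (simp add: nn_integral_cmult geom_up G_def)
    finally have "(\<integral>\<^sup>+j. a j \<partial>count_space {j\<in>Z. k \<le> j}) powe p \<le> (S k powe (1/p) * ennreal G) powe p"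
      using p by (intro powe_mono) auto
    also have "\<dots> = S k * ennreal (G powr p)"
      using p d by (simp add: powe_mult powe_powe powe_ennreal G_def)
    finally show ?thesis .
  qed
  have "(\<integral>\<^sup>+k. ennreal (2 powi k) * (\<integral>\<^sup>+j. a j \<partial>count_space {j\<in>Z. k \<le> j}) powe p \<partial>count_space Z)
      \<le> (\<integral>\<^sup>+k. ennreal (2 powi k) * (S k * ennreal (G powr p)) \<partial>count_space Z)"
    using step1 by (intro nn_integral_mono mult_left_mono) auto
  also have "\<dots> = ennreal (G powr p) * (\<integral>\<^sup>+k. (\<integral>\<^sup>+i. (if k \<le> i then ennreal (2 powi k) * (a i powe p * ennreal (\<rho> ^ nat (i - k))) else 0) \<partial>count_space Z) \<partial>count_space Z)"
    unfolding S_def count_restrict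
    by (subst nn_integral_cmult[symmetric]) (auto simp: nn_integral_cmult[symmetric] mult_ac intro!: nn_integral_cong)
  also have "\<dots> = ennreal (G powr p) * (\<integral>\<^sup>+i. (\<integral>\<^sup>+k. (if k \<le> i then ennreal (2 powi k) * (a i powe p * ennreal (\<rho> ^ nat (i - k))) else 0) \<partial>count_space Z) \<partial>count_space Z)"
    by (subst nn_integral_count_space_nn_integral) auto
  also have "\<dots> \<le> ennreal (G powr p) * (\<integral>\<^sup>+i. ennreal (2 powi i) * a i powe p * ennreal (1 / (1 - 1/\<rho>)) \<partial>count_space Z)"
  proof (intro mult_left_mono nn_integral_mono)
    fix i
    have e: "ennreal (2 powi k) * (a i powe p * ennreal (\<rho> ^ nat (i - k))) = ennreal (2 powi i) * a i powe p * ennreal ((1/\<rho>) ^ nat (i - k))"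
      if "k \<le> i" for k
    proof -
      have "2 powi k * \<rho> ^ nat (i - k) = 2 powi i * (1/\<rho>) ^ nat (i - k)"
      proof -
        have "2 powi i * (1/\<rho>) ^ nat (i - k) = 2 powi k * 2 ^ nat (i - k) * (1/\<rho>) ^ nat (i - k)"
          using powi_split[OF that] by simp
        also have "\<dots> = 2 powi k * (2 * (1/\<rho>)) ^ nat (i - k)"
          by (simp only: power_mult_distrib mult.assoc)
        also have "2 * (1/\<rho>) = \<rho>" using \<rho> by (simp add: field_simps)
        finally show ?thesis by simp
      qed
      then show ?thesis using \<rho>
        by (simp add: ennreal_mult''[symmetric] mult_ac)
    qed
    have "(\<integral>\<^sup>+k. (if k \<le> i then ennreal (2 powi k) * (a i powe p * ennreal (\<rho> ^ nat (i - k))) else 0) \<partial>count_space Z)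
       = (\<integral>\<^sup>+k. ennreal (2 powi i) * a i powe p * ennreal ((1/\<rho>) ^ nat (i - k)) \<partial>count_space {k\<in>Z. k \<le> i})"
      unfolding count_restrict using e by (intro nn_integral_cong) auto
    also have "\<dots> \<le> (\<integral>\<^sup>+k. ennreal (2 powi i) * a i powe p * ennreal ((1/\<rho>) ^ nat (i - k)) \<partial>count_space {k. k \<le> i})"
      by (intro count_mono_set) auto
    also have "\<dots> = ennreal (2 powi i) * a i powe p * ennreal (1 / (1 - 1/\<rho>))"
      using \<rho> by (simp add: nn_integral_cmult geom_down)
    finally show "(\<integral>\<^sup>+k. (if k \<le> i then ennreal (2 powi k) * (a i powe p * ennreal (\<rho> ^ nat (i - k))) else 0) \<partial>count_space Z)
       \<le> ennreal (2 powi i) * a i powe p * ennreal (1 / (1 - 1/\<rho>))" .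
  qed simp
  also have "\<dots> = ennreal (gK p) * (\<integral>\<^sup>+j. ennreal (2 powi j) * a j powe p \<partial>count_space Z)"
  proof -
    have "gK p = G powr p * (1 / (1 - 1/\<rho>))" unfolding gK_def G_def d_def \<rho>_def by simp
    moreover have "0 \<le> 1 / (1 - 1/\<rho>)" using \<rho> by (simp add: field_simps)
    ultimately show ?thesis
      by (simp add: nn_integral_cmult[symmetric] ennreal_mult''[symmetric] mult_ac nn_integral_multc)
  qed
  finally show ?thesis .
qed




lemma set_mono_int: "A \<subseteq> B \<Longrightarrow> (\<integral>\<^sup>+t\<in>A. f t \<partial>M) \<le> (\<integral>\<^sup>+t\<in>B. f t \<partial>M)"
  by (intro nn_integral_mono) (auto split: split_indicator)

definition JJ :: "(int \<Rightarrow> ereal) \<Rightarrow> int \<Rightarrow> real set" where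
  "JJ x k = {y. x k \<le> ereal y \<and> ereal y < x (k + 1)}"

lemma JJ_borel[measurable]: "JJ x k \<in> sets borel"
  unfolding JJ_def by measurable

lemma JJ_lborel[measurable]: "JJ x k \<in> sets lborel"
  by simp

locale cov =
  fixes u :: "real \<Rightarrow> real" and Z :: "int set" and x :: "int \<Rightarrow> ereal"
  assumes wu: "is_weight u" and cs: "covering_seq u Z x"
begin

lemma u_meas[measurable]: "u \<in> borel_measurable borel"
  using wu by (simp add: is_weight_def)

lemma U: "k \<in> Z \<Longrightarrow> 0 < x k \<and> x k < \<infinity> \<and>
   (\<integral>\<^sup>+ t\<in>{t. 0 < t \<and> ereal t < x k}. ennreal (u t) \<partial>lborel) = ennreal (2 powi k)"
  using cs by (simp add: covering_seq_def)

lemma xstrict: "j \<in> Z \<Longrightarrow> k \<in> Z \<Longrightarrow> j < k \<Longrightarrow> x j < x k"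
  using cs by (simp add: covering_seq_def)

lemma Zcases: "(Z = UNIV) \<or> (\<exists>M. ennreal (2 powi M) \<le> (\<integral>\<^sup>+ t\<in>{0<..}. ennreal (u t) \<partial>lborel) \<and>
              (\<integral>\<^sup>+ t\<in>{0<..}. ennreal (u t) \<partial>lborel) < ennreal (2 powi (M + 1)) \<and>
              Z = {k. k \<le> M} \<and> x (M + 1) = \<infinity>)"
  using cs unfolding covering_seq_def by (metis (no_types, lifting))

lemma Zdown: "k \<in> Z \<Longrightarrow> j \<le> k \<Longrightarrow> j \<in> Z"
  using Zcases by auto

lemma Zne: "\<exists>k. k \<in> Z"
  using Zcases by auto

lemma xsucc: "k \<in> Z \<Longrightarrow> k + 1 \<notin> Z \<Longrightarrow> x (k + 1) = \<infinity> \<and>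
   (\<integral>\<^sup>+ t\<in>{0<..}. ennreal (u t) \<partial>lborel) < ennreal (2 powi (k + 1))"
proof -
  assume k: "k \<in> Z" "k + 1 \<notin> Z"
  then obtain M where M: "(\<integral>\<^sup>+ t\<in>{0<..}. ennreal (u t) \<partial>lborel) < ennreal (2 powi (M + 1))"
     "Z = {k. k \<le> M}" "x (M + 1) = \<infinity>"
    using Zcases by auto
  then have "k = M" using k by auto
  then show ?thesis using M by simp
qed

lemma xlt: "k \<in> Z \<Longrightarrow> x k < x (k + 1)"
  using xstrict[of k "k+1"] xsucc[of k] U[of k] by (cases "k + 1 \<in> Z") auto

lemma xle: "j \<in> Z \<Longrightarrow> k \<in> Z \<Longrightarrow> j \<le> k \<Longrightarrow> x j \<le> x k"
  using xstrict[of j k] by (cases "j = k") auto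

lemma xsucc_le: "j \<in> Z \<Longrightarrow> k \<in> Z \<Longrightarrow> j < k \<Longrightarrow> x (j + 1) \<le> x k"
  using xle[of "j+1" k] Zdown[of k "j+1"] by auto

lemma JJ_pos: "k \<in> Z \<Longrightarrow> y \<in> JJ x k \<Longrightarrow> 0 < y"
  using U[of k] unfolding JJ_def by (auto dest: less_le_trans)

lemma JJ_disj: "j \<in> Z \<Longrightarrow> k \<in> Z \<Longrightarrow> j \<noteq> k \<Longrightarrow> y \<in> JJ x j \<Longrightarrow> y \<notin> JJ x k"
proof -
  assume jk: "j \<in> Z" "k \<in> Z" "j \<noteq> k" "y \<in> JJ x j"
  show "y \<notin> JJ x k"
  proof
    assume yk: "y \<in> JJ x k"
    show False
    proof (cases "j < k")
      case True
      then have "x (j+1) \<le> x k" using xsucc_le jk by auto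
      then show False using jk yk unfolding JJ_def by auto
    next
      case False
      then have "x (k+1) \<le> x j" using xsucc_le jk by auto
      then show False using jk yk unfolding JJ_def by auto
    qed
  qed
qed

lemma Useg: "0 < y \<Longrightarrow> (\<integral>\<^sup>+ t\<in>{t. 0 < t \<and> ereal t < ereal y}. ennreal (u t) \<partial>lborel) \<noteq> 0 \<and>
   (\<integral>\<^sup>+ t\<in>{t. 0 < t \<and> ereal t < ereal y}. ennreal (u t) \<partial>lborel) < top"
proof -
  assume "0 < y"
  moreover have "{t. 0 < t \<and> ereal t < ereal y} = {0<..<y}" by auto
  ultimately show ?thesis using wu unfolding is_weight_def by auto
qed

lemma cover: assumes y: "0 < y" shows "\<exists>k\<in>Z. y \<in> JJ x k"
proof -
  define c where "c = (\<integral>\<^sup>+ t\<in>{t. 0 < t \<and> ereal t < ereal y}. ennreal (u t) \<partial>lborel)"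
  obtain cr where cr: "c = ennreal cr" "0 < cr"
  proof -
    have "c \<noteq> 0" "c < top" using Useg[OF y] unfolding c_def by auto
    then show ?thesis using that[of "enn2real c"]
      by (auto simp: enn2real_positive_iff zero_less_iff_neq_zero less_top)
  qed
  have small: "x k \<le> ereal y" if k: "k \<in> Z" "ennreal (2 powi k) < c" for k
  proof (rule ccontr)
    assume "\<not> x k \<le> ereal y"
    then have "{t. 0 < t \<and> ereal t < ereal y} \<subseteq> {t. 0 < t \<and> ereal t < x k}"
      apply (auto simp: not_le) by (rule less_trans[of _ "ereal y"]) auto
    from set_mono_int[OF this, where f="\<lambda>t. ennreal (u t)" and M=lborel]
    have "c \<le> ennreal (2 powi k)"
      unfolding c_def using U[OF k(1)] by simp
    then show False using k by simp
  qed
  have big: "ennreal (2 powi k) \<le> c" if k: "k \<in> Z" "x k \<le> ereal y" for k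
  proof -
    have "{t. 0 < t \<and> ereal t < x k} \<subseteq> {t. 0 < t \<and> ereal t < ereal y}"
    proof (intro subsetI, clarsimp)
      fix t assume "0 < t" "ereal t < x k"
      have "ereal t < ereal y" using \<open>ereal t < x k\<close> k(2) by (rule less_le_trans)
      then show "t < y" by simp
    qed
    from set_mono_int[OF this, where f="\<lambda>t. ennreal (u t)" and M=lborel]
    show ?thesis unfolding c_def using U[OF k(1)] by simp
  qed
  obtain k0 where k0: "k0 \<in> Z" using Zne by auto
  obtain n :: nat where n: "(1/2::real) ^ n < cr" using real_arch_pow_inv[OF cr(2), of "1/2"] by auto
  define k1 where "k1 = min k0 (- int n)"
  have k1Z: "k1 \<in> Z" using Zdown[OF k0] by (simp add: k1_def)
  have "(2::real) powi k1 \<le> 2 powi (- int n)" unfolding k1_def by (intro power_int_increasing) auto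
  also have "\<dots> = (1/2) ^ n" by (simp add: power_int_minus power_one_over inverse_eq_divide)
  finally have "ennreal (2 powi k1) < c" using n cr by (simp add: ennreal_lessI)
  then have k1y: "x k1 \<le> ereal y" using small k1Z by blast
  obtain m :: nat where m: "cr < 2 ^ m" using real_arch_pow[of 2 cr] by auto
  define K where "K = {k\<in>Z. x k \<le> ereal y}"
  define K' where "K' = {k\<in>Z. x k \<le> ereal y \<and> k1 \<le> k}"
  have Kb: "K' \<subseteq> {k1..int m}"
  proof
    fix k assume "k \<in> K'"
    then have kZ: "k \<in> Z" and kx: "x k \<le> ereal y" and "k1 \<le> k" by (auto simp: K'_def)
    have "ennreal (2 powi k) \<le> ennreal cr" using big[OF kZ kx] cr by simp
    then have "2 powi k \<le> cr" using cr by (simp add: ennreal_le_iff)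
    then have "(2::real) powi k < 2 powi (int m)" using m by (simp add: power_int_of_nat)
    then have "k < int m" by (rule power_int_le_imp_less_exp[rotated]) auto
    then show "k \<in> {k1..int m}" using \<open>k1 \<le> k\<close> by auto
  qed
  have finK: "finite K'" using Kb finite_subset by blast
  have k1K: "k1 \<in> K'" using k1Z k1y by (simp add: K'_def)
  define k2 where "k2 = Max K'"
  have k2K: "k2 \<in> K'" using finK k1K unfolding k2_def by (intro Max_in) auto
  have k2max: "k \<le> k2" if "k \<in> K'" for k using finK that unfolding k2_def by simp
  have "ereal y < x (k2 + 1)"
  proof (cases "k2 + 1 \<in> Z")
    case True
    have "k2 + 1 \<notin> K'" using k2max[of "k2+1"] by linarith
    then show ?thesis using True k2K by (auto simp: K'_def)
  next
    case False
    then show ?thesis using xsucc[of k2] k2K by (auto simp: K'_def)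
  qed
  then show ?thesis using k2K unfolding JJ_def K'_def by auto
qed

lemma split_J: assumes "j \<in> Z"
  shows "(\<integral>\<^sup>+ t\<in>{t. 0 < t \<and> ereal t < x (j+1)}. ennreal (u t) \<partial>lborel)
       = ennreal (2 powi j) + (\<integral>\<^sup>+ t\<in>JJ x j. ennreal (u t) \<partial>lborel)"
proof -
  have "{t. 0 < t \<and> ereal t < x (j+1)} = {t. 0 < t \<and> ereal t < x j} \<union> JJ x j"
    using JJ_pos[OF assms] xlt[OF assms] unfolding JJ_def by (auto simp: not_le intro: less_trans)
  moreover have "{t. 0 < t \<and> ereal t < x j} \<inter> JJ x j = {}" unfolding JJ_def by auto
  moreover have "{t. 0 < t \<and> ereal t < x j} \<in> sets lborel" by measurable
  ultimately show ?thesis using U[OF assms]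
    by (simp add: nn_integral_disjoint_pair)
qed

lemma uJ_eq: assumes "k \<in> Z" shows "(\<integral>\<^sup>+ t\<in>JJ x (k-1). ennreal (u t) \<partial>lborel) = ennreal (2 powi (k-1))"
proof -
  have j: "k - 1 \<in> Z" using Zdown[OF assms] by simp
  have "ennreal (2 powi (k-1)) + (\<integral>\<^sup>+ t\<in>JJ x (k-1). ennreal (u t) \<partial>lborel) = ennreal (2 powi k)"
    using split_J[OF j] U[OF assms] by simp
  also have "ennreal (2 powi k) = ennreal (2 powi (k-1)) + ennreal (2 powi (k-1))"
  proof -
    have "(2::real) powi k = 2 powi (k-1) * 2 powi 1" using power_int_add[of "2::real" "k-1" 1] by simp
    then show ?thesis by (simp flip: ennreal_plus)
  qed
  finally show ?thesis by (simp add: ennreal_add_left_cancel)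
qed

lemma uJ_le: assumes "k \<in> Z" shows "(\<integral>\<^sup>+ t\<in>JJ x k. ennreal (u t) \<partial>lborel) \<le> ennreal (2 powi k)"
proof (cases "k + 1 \<in> Z")
  case True then show ?thesis using uJ_eq[of "k+1"] by simp
next
  case False
  have "ennreal (2 powi k) + (\<integral>\<^sup>+ t\<in>JJ x k. ennreal (u t) \<partial>lborel)
     = (\<integral>\<^sup>+ t\<in>{t. 0 < t \<and> ereal t < x (k+1)}. ennreal (u t) \<partial>lborel)"
    using split_J[OF assms] by simp
  also have "{t. 0 < t \<and> ereal t < x (k+1)} = {0<..}" using xsucc[OF assms False] by auto
  also have "(\<integral>\<^sup>+ t\<in>{0<..}. ennreal (u t) \<partial>lborel) < ennreal (2 powi (k+1))" using xsucc[OF assms False] by simp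
  also have "ennreal (2 powi (k+1)) = ennreal (2 powi k) + ennreal (2 powi k)"
  proof -
    have "(2::real) powi (k+1) = 2 powi k * 2 powi 1" using power_int_add[of "2::real" k 1] by simp
    then show ?thesis by (simp flip: ennreal_plus)
  qed
  finally show ?thesis by (simp add: ennreal_add_left_cancel_less)
qed

end



lemma powe_meas0: "(\<lambda>x::ennreal. x powe s) \<in> borel_measurable borel"
proof -
  define c where "c = (if 0<s then top else if s=0 then 1 else (0::ennreal))"
  have "(\<lambda>x. x powe s) = (\<lambda>x. if x = top then c else ennreal (enn2real x powr s))"
    by (simp add: enn_powr_def fun_eq_iff c_def)
  moreover have "(\<lambda>x. if x = top then c else ennreal (enn2real x powr s)) \<in> borel_measurable borel"
    by measurable
  ultimately show ?thesis by simp
qed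

locale mainl = cov +
  fixes w h :: "real \<Rightarrow> real" and q r :: real
  assumes ww: "is_weight w" and hh: "nonneg_meas h" and q: "0 < q" and r: "0 < r"
begin

lemma w_meas[measurable]: "w \<in> borel_measurable borel"
  using ww by (simp add: is_weight_def)
lemma h_meas[measurable]: "h \<in> borel_measurable borel"
  using hh by (simp add: nonneg_meas_def)

definition "p = r / q"
lemma p: "0 < p" using q r by (simp add: p_def)
lemma qp: "q * p = r" using q by (simp add: p_def)

definition "H s = (\<integral>\<^sup>+ \<tau>\<in>{s<..}. ennreal (h \<tau>) \<partial>lborel)"
definition "F y = (\<integral>\<^sup>+ t\<in>{y<..}. (H t powe q) * ennreal (w t) \<partial>lborel)"
definition "h1 k s = (\<integral>\<^sup>+ \<tau>\<in>{\<tau>. s < \<tau> \<and> ereal \<tau> < x (k + 1)}. ennreal (h \<tau>) \<partial>lborel)"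
definition "W t s = (\<integral>\<^sup>+ \<tau>\<in>{t<..<s}. ennreal (w \<tau>) \<partial>lborel)"
definition "G t = (SUP s\<in>{t<..}. (W t s powe p) * (H s powe r))"

lemma H_anti: "a \<le> b \<Longrightarrow> H b \<le> H a"
  unfolding H_def by (rule set_mono_int) auto
lemma H_meas[measurable]: "H \<in> borel_measurable borel"
  by (rule antimono_borel_ennreal) (rule H_anti)
lemma F_anti: "a \<le> b \<Longrightarrow> F b \<le> F a"
  unfolding F_def by (rule set_mono_int) auto
lemma F_meas[measurable]: "F \<in> borel_measurable borel"
  by (rule antimono_borel_ennreal) (rule F_anti)
lemma h1_anti: "a \<le> b \<Longrightarrow> h1 k b \<le> h1 k a"
  unfolding h1_def by (rule set_mono_int) auto
lemma h1_meas[measurable]: "h1 k \<in> borel_measurable borel"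
  by (rule antimono_borel_ennreal) (rule h1_anti)

lemma powe_meas[measurable]: "f \<in> borel_measurable M \<Longrightarrow> (\<lambda>x. f x powe s) \<in> borel_measurable M"
  using measurable_compose[OF _ powe_meas0] by blast

lemma G_le: assumes "0 < t" shows "G t \<le> F t powe p"
  unfolding G_def
proof (rule SUP_least)
  fix s assume s: "s \<in> {t<..}"
  have "W t s * H s powe q = (\<integral>\<^sup>+ \<tau>\<in>{t<..<s}. ennreal (w \<tau>) * H s powe q \<partial>lborel)"
    unfolding W_def by (subst nn_integral_multc[symmetric]) (auto simp: mult_ac)
  also have "\<dots> \<le> (\<integral>\<^sup>+ \<tau>\<in>{t<..<s}. H \<tau> powe q * ennreal (w \<tau>) \<partial>lborel)"
    by (intro nn_integral_mono) (auto split: split_indicator simp: mult_ac intro!: mult_left_mono powe_mono H_anti q)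
  also have "\<dots> \<le> F t" unfolding F_def by (rule set_mono_int) auto
  finally have "(W t s * H s powe q) powe p \<le> F t powe p" by (rule powe_mono) (rule p)
  moreover have "(W t s * H s powe q) powe p = W t s powe p * H s powe r"
    using p q by (simp add: powe_mult powe_powe qp)
  ultimately show "W t s powe p * H s powe r \<le> F t powe p" by simp
qed

definition "L = (\<integral>\<^sup>+ y\<in>{0<..}. (F y powe p) * ennreal (u y) \<partial>lborel)"
definition "Ss = (\<integral>\<^sup>+ t\<in>{0<..}. ennreal (u t) * G t \<partial>lborel)"

lemma S_le_L: "Ss \<le> L"
  unfolding Ss_def L_def
  by (intro nn_integral_mono) (auto split: split_indicator simp: mult_ac intro!: mult_left_mono G_le)

definition "b k = (\<integral>\<^sup>+ s\<in>{s. x k < ereal s \<and> ereal s < x (k + 1)}. (h1 k s powe q) * ennreal (w s) \<partial>lborel)"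
definition "Bs = (\<integral>\<^sup>+ k. (ennreal (2 powr (real_of_int k / r)) * (b k powe (1 / q))) powe r \<partial>count_space Z)"
definition "xr k = real_of_ereal (x k)"

lemma xr: "k \<in> Z \<Longrightarrow> x k = ereal (xr k) \<and> 0 < xr k"
  using U[of k] unfolding xr_def by (cases "x k") auto

lemma term_eq: "(ennreal (2 powr (real_of_int k / r)) * (c powe (1 / q))) powe r = ennreal (2 powi k) * c powe p"
proof -
  have "(ennreal (2 powr (real_of_int k / r)) * (c powe (1 / q))) powe r
      = ennreal (2 powr (real_of_int k / r)) powe r * (c powe (1 / q)) powe r"
    using r by (simp add: powe_mult)
  also have "ennreal (2 powr (real_of_int k / r)) powe r = ennreal (2 powi k)"
    using r by (simp add: powe_ennreal powr_powr powr_real_of_int')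
  also have "(c powe (1 / q)) powe r = c powe p"
    using r q by (simp add: powe_powe p_def)
  finally show ?thesis .
qed

lemma Bs_eq: "Bs = (\<integral>\<^sup>+ k. ennreal (2 powi k) * b k powe p \<partial>count_space Z)"
  unfolding Bs_def term_eq ..

lemma b_le_F: assumes "k \<in> Z" shows "b k \<le> F (xr k)"
proof -
  have "b k \<le> (\<integral>\<^sup>+ s\<in>{s. x k < ereal s \<and> ereal s < x (k + 1)}. (H s powe q) * ennreal (w s) \<partial>lborel)"
    unfolding b_def
    by (intro nn_integral_mono) (auto split: split_indicator intro!: mult_right_mono powe_mono q
         simp: h1_def H_def intro: set_mono_int)
  also have "\<dots> \<le> F (xr k)" unfolding F_def using xr[OF assms] by (intro set_mono_int) auto
  finally show ?thesis .
qed

lemma two_pow: "ennreal (2 powi k) = 2 * ennreal (2 powi (k - 1))"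
proof -
  have "(2::real) powi k = 2 powi (k-1) * 2 powi 1" using power_int_add[of "2::real" "k-1" 1] by simp
  then show ?thesis by (simp add: ennreal_mult'' mult_ac)
qed

lemma LJ: assumes "k \<in> Z"
  shows "ennreal (2 powi k) * F (xr k) powe p \<le> 2 * (\<integral>\<^sup>+ y\<in>JJ x (k-1). F y powe p * ennreal (u y) \<partial>lborel)"
proof -
  have "ennreal (2 powi k) * F (xr k) powe p = 2 * (F (xr k) powe p * (\<integral>\<^sup>+ y\<in>JJ x (k-1). ennreal (u y) \<partial>lborel))"
    using uJ_eq[OF assms] two_pow[of k] by (simp add: mult_ac)
  also have "\<dots> = 2 * (\<integral>\<^sup>+ y\<in>JJ x (k-1). F (xr k) powe p * ennreal (u y) \<partial>lborel)"
    by (subst nn_integral_cmult[symmetric]) (auto simp: mult_ac)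
  also have "\<dots> \<le> 2 * (\<integral>\<^sup>+ y\<in>JJ x (k-1). F y powe p * ennreal (u y) \<partial>lborel)"
  proof (intro mult_left_mono nn_integral_mono)
    fix y
    show "F (xr k) powe p * ennreal (u y) * indicator (JJ x (k - 1)) y \<le> F y powe p * ennreal (u y) * indicator (JJ x (k - 1)) y"
    proof (cases "y \<in> JJ x (k-1)")
      case True
      then have "y \<le> xr k" using xr[OF assms] unfolding JJ_def by auto
      then show ?thesis using True by (auto intro!: mult_right_mono powe_mono p F_anti)
    qed simp
  qed simp
  finally show ?thesis .
qed

lemma B_le: "Bs \<le> 2 * L"
proof -
  have "Bs \<le> (\<integral>\<^sup>+ k. (\<integral>\<^sup>+ y. 2 * (F y powe p * ennreal (u y) * indicator (JJ x (k-1)) y) \<partial>lborel) \<partial>count_space Z)"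
    unfolding Bs_eq
  proof (intro nn_integral_mono)
    fix k assume "k \<in> space (count_space Z)"
    then have k: "k \<in> Z" by simp
    have "ennreal (2 powi k) * b k powe p \<le> ennreal (2 powi k) * F (xr k) powe p"
      by (intro mult_left_mono powe_mono b_le_F k p) auto
    also have "\<dots> \<le> 2 * (\<integral>\<^sup>+ y\<in>JJ x (k-1). F y powe p * ennreal (u y) \<partial>lborel)" by (rule LJ[OF k])
    also have "\<dots> = (\<integral>\<^sup>+ y. 2 * (F y powe p * ennreal (u y) * indicator (JJ x (k-1)) y) \<partial>lborel)"
      by (subst nn_integral_cmult) auto
    finally show "ennreal (2 powi k) * b k powe p \<le> \<dots>" .
  qed
  also have "\<dots> \<le> (\<integral>\<^sup>+ y. 2 * (F y powe p * ennreal (u y) * indicator {0<..} y) \<partial>lborel)"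
  proof (rule sum_disj_le)
    fix y i j assume ij: "i \<in> Z" "j \<in> Z" "i \<noteq> j"
    then have "i - 1 \<in> Z" "j - 1 \<in> Z" "i - 1 \<noteq> j - 1" using Zdown by auto
    then show "2 * (F y powe p * ennreal (u y) * indicator (JJ x (i-1)) y) = 0 \<or>
               2 * (F y powe p * ennreal (u y) * indicator (JJ x (j-1)) y) = 0"
      using JJ_disj by (auto split: split_indicator)
  next
    fix y i assume i: "i \<in> Z"
    then have "i - 1 \<in> Z" using Zdown by auto
    then show "2 * (F y powe p * ennreal (u y) * indicator (JJ x (i-1)) y) \<le> 2 * (F y powe p * ennreal (u y) * indicator {0<..} y)"
      using JJ_pos by (auto split: split_indicator)
  qed auto
  also have "\<dots> = 2 * L" unfolding L_def by (subst nn_integral_cmult) auto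
  finally show ?thesis .
qed

definition "a j = (\<integral>\<^sup>+ t\<in>JJ x j. H t powe q * ennreal (w t) \<partial>lborel)"
definition "H' j = (\<integral>\<^sup>+ \<tau>\<in>{\<tau>. x (j + 1) < ereal \<tau>}. ennreal (h \<tau>) \<partial>lborel)"
definition "WJ j = (\<integral>\<^sup>+ t\<in>JJ x j. ennreal (w t) \<partial>lborel)"

lemma C1: "L \<le> (\<integral>\<^sup>+ k. (\<integral>\<^sup>+ y. F y powe p * ennreal (u y) * indicator (JJ x k) y \<partial>lborel) \<partial>count_space Z)"
  unfolding L_def
proof (rule cover_le_sum)
  fix y
  show "F y powe p * ennreal (u y) * indicator {0<..} y \<le> (\<integral>\<^sup>+ k. F y powe p * ennreal (u y) * indicator (JJ x k) y \<partial>count_space Z)"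
  proof (cases "0 < y")
    case True
    then obtain k where k: "k \<in> Z" "y \<in> JJ x k" using cover by blast
    have "F y powe p * ennreal (u y) * indicator {0<..} y = F y powe p * ennreal (u y) * indicator (JJ x k) y"
      using True k by simp
    also have "\<dots> \<le> (\<integral>\<^sup>+ k. F y powe p * ennreal (u y) * indicator (JJ x k) y \<partial>count_space Z)"
      by (rule nn_integral_ge_point[OF k(1)])
    finally show ?thesis .
  qed simp
qed auto

lemma C2: assumes "k \<in> Z"
  shows "(\<integral>\<^sup>+ y. F y powe p * ennreal (u y) * indicator (JJ x k) y \<partial>lborel) \<le> ennreal (2 powi k) * F (xr k) powe p"
proof -
  have "(\<integral>\<^sup>+ y. F y powe p * ennreal (u y) * indicator (JJ x k) y \<partial>lborel)
     \<le> (\<integral>\<^sup>+ y. F (xr k) powe p * (ennreal (u y) * indicator (JJ x k) y) \<partial>lborel)"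
  proof (intro nn_integral_mono)
    fix y
    show "F y powe p * ennreal (u y) * indicator (JJ x k) y \<le> F (xr k) powe p * (ennreal (u y) * indicator (JJ x k) y)"
    proof (cases "y \<in> JJ x k")
      case True
      then have "xr k \<le> y" using xr[OF assms] unfolding JJ_def by auto
      then show ?thesis using True by (auto intro!: mult_right_mono powe_mono p F_anti)
    qed simp
  qed
  also have "\<dots> = F (xr k) powe p * (\<integral>\<^sup>+ y\<in>JJ x k. ennreal (u y) \<partial>lborel)"
    by (subst nn_integral_cmult) auto
  also have "\<dots> \<le> F (xr k) powe p * ennreal (2 powi k)"
    by (intro mult_left_mono uJ_le assms) auto
  finally show ?thesis by (simp add: mult_ac)
qed

lemma C3: assumes "k \<in> Z" shows "F (xr k) \<le> (\<integral>\<^sup>+ j. a j \<partial>count_space {j\<in>Z. k \<le> j})"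
  unfolding F_def a_def
proof (rule cover_le_sum)
  fix t
  show "H t powe q * ennreal (w t) * indicator {xr k<..} t \<le> (\<integral>\<^sup>+ j. H t powe q * ennreal (w t) * indicator (JJ x j) t \<partial>count_space {j\<in>Z. k \<le> j})"
  proof (cases "xr k < t")
    case True
    then have "0 < t" using xr[OF assms] by simp
    then obtain j where j: "j \<in> Z" "t \<in> JJ x j" using cover by blast
    have "k \<le> j"
    proof (rule ccontr)
      assume "\<not> k \<le> j"
      then have "x (j+1) \<le> x k" using xsucc_le[OF j(1) assms] by simp
      moreover have "ereal t < x (j+1)" using j(2) unfolding JJ_def by auto
      ultimately have "ereal t < ereal (xr k)" using xr[OF assms] by (metis less_le_trans)
      then show False using True by simp
    qed
    then have jI: "j \<in> {j\<in>Z. k \<le> j}" using j by simp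
    have "H t powe q * ennreal (w t) * indicator {xr k<..} t = H t powe q * ennreal (w t) * indicator (JJ x j) t"
      using True j by simp
    also have "\<dots> \<le> (\<integral>\<^sup>+ j. H t powe q * ennreal (w t) * indicator (JJ x j) t \<partial>count_space {j\<in>Z. k \<le> j})"
      by (rule nn_integral_ge_point[OF jI])
    finally show ?thesis .
  qed simp
qed auto

lemma H_split: assumes "j \<in> Z" "s \<in> JJ x j" shows "H s \<le> h1 j s + H' j"
proof -
  have "H s \<le> (\<integral>\<^sup>+ \<tau>. ennreal (h \<tau>) * indicator {\<tau>. s < \<tau> \<and> ereal \<tau> < x (j + 1)} \<tau>
                   + ennreal (h \<tau>) * indicator {\<tau>. x (j + 1) < ereal \<tau>} \<tau> \<partial>lborel)"
    unfolding H_def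
  proof (rule nn_integral_mono_AE)
    show "AE \<tau> in lborel. ennreal (h \<tau>) * indicator {s<..} \<tau> \<le> ennreal (h \<tau>) * indicator {\<tau>. s < \<tau> \<and> ereal \<tau> < x (j + 1)} \<tau>
                   + ennreal (h \<tau>) * indicator {\<tau>. x (j + 1) < ereal \<tau>} \<tau>"
      using AE_lborel_singleton[of "real_of_ereal (x (j+1))"]
    proof (rule eventually_mono)
      fix \<tau> :: real assume ne: "\<tau> \<noteq> real_of_ereal (x (j + 1))"
      show "ennreal (h \<tau>) * indicator {s<..} \<tau> \<le> ennreal (h \<tau>) * indicator {\<tau>. s < \<tau> \<and> ereal \<tau> < x (j + 1)} \<tau>
                   + ennreal (h \<tau>) * indicator {\<tau>. x (j + 1) < ereal \<tau>} \<tau>"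
      proof (cases "s < \<tau>")
        case True
        have "ereal \<tau> \<noteq> x (j+1)" using ne by (metis real_of_ereal.simps(1))
        then have "ereal \<tau> < x (j + 1) \<or> x (j + 1) < ereal \<tau>" by auto
        then show ?thesis using True by (auto split: split_indicator)
      qed simp
    qed
  qed
  also have "\<dots> = h1 j s + H' j" unfolding h1_def H'_def by (subst nn_integral_add) auto
  finally show ?thesis .
qed

lemma b_eq: "b j = (\<integral>\<^sup>+ s\<in>JJ x j. (h1 j s powe q) * ennreal (w s) \<partial>lborel)" if "j \<in> Z"
  unfolding b_def
proof (rule nn_integral_cong_AE)
  show "AE s in lborel. h1 j s powe q * ennreal (w s) * indicator {s. x j < ereal s \<and> ereal s < x (j + 1)} s =
             h1 j s powe q * ennreal (w s) * indicator (JJ x j) s"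
    using AE_lborel_singleton[of "xr j"]
  proof (rule eventually_mono)
    fix s assume "s \<noteq> xr j"
    then have "x j < ereal s \<longleftrightarrow> x j \<le> ereal s" using xr[OF that] by auto
    then show "h1 j s powe q * ennreal (w s) * indicator {s. x j < ereal s \<and> ereal s < x (j + 1)} s =
             h1 j s powe q * ennreal (w s) * indicator (JJ x j) s"
      unfolding JJ_def by (auto split: split_indicator)
  qed
qed

lemma C4: assumes "j \<in> Z" shows "a j \<le> 2 powe q * (b j + H' j powe q * WJ j)"
proof -
  have "a j \<le> (\<integral>\<^sup>+ t. 2 powe q * (h1 j t powe q * ennreal (w t) * indicator (JJ x j) t)
                      + 2 powe q * H' j powe q * (ennreal (w t) * indicator (JJ x j) t) \<partial>lborel)"
    unfolding a_def
  proof (intro nn_integral_mono)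
    fix t
    show "H t powe q * ennreal (w t) * indicator (JJ x j) t \<le> 2 powe q * (h1 j t powe q * ennreal (w t) * indicator (JJ x j) t)
                      + 2 powe q * H' j powe q * (ennreal (w t) * indicator (JJ x j) t)"
    proof (cases "t \<in> JJ x j")
      case True
      have "H t powe q \<le> (h1 j t + H' j) powe q" using H_split[OF assms True] q by (rule powe_mono)
      also have "\<dots> \<le> 2 powe q * (h1 j t powe q + H' j powe q)" using q by (rule powe_add_le)
      finally have "H t powe q * ennreal (w t) \<le> 2 powe q * (h1 j t powe q + H' j powe q) * ennreal (w t)"
        by (rule mult_right_mono) simp
      then show ?thesis using True by (simp add: distrib_left distrib_right mult_ac)
    qed simp
  qed
  also have "\<dots> = 2 powe q * b j + 2 powe q * H' j powe q * WJ j"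
    unfolding b_eq[OF assms] WJ_def
    by (subst nn_integral_add) (auto simp: nn_integral_cmult)
  finally show ?thesis by (simp add: distrib_left mult_ac)
qed

lemma C5: assumes "j \<in> Z" shows "a j powe p \<le> 2 powe r * (2 powe p * (b j powe p + H' j powe r * WJ j powe p))"
proof -
  have "a j powe p \<le> (2 powe q * (b j + H' j powe q * WJ j)) powe p"
    using C4[OF assms] p by (rule powe_mono)
  also have "\<dots> = 2 powe r * (b j + H' j powe q * WJ j) powe p"
    using p q by (simp add: powe_mult powe_powe qp)
  also have "\<dots> \<le> 2 powe r * (2 powe p * (b j powe p + (H' j powe q * WJ j) powe p))"
    by (intro mult_left_mono powe_add_le p) simp
  also have "(H' j powe q * WJ j) powe p = H' j powe r * WJ j powe p"
    using p q by (simp add: powe_mult powe_powe qp)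
  finally show ?thesis .
qed

lemma c_le_G: assumes j: "j \<in> Z" and t: "t \<in> JJ x (j - 1)"
  shows "H' j powe r * WJ j powe p \<le> G t"
proof (cases "j + 1 \<in> Z")
  case False
  then have "H' j = 0" using xsucc[OF j] unfolding H'_def by simp
  then show ?thesis using r by simp
next
  case True
  define s where "s = xr (j+1)"
  have xs: "x (j+1) = ereal s" using xr[OF True] by (simp add: s_def)
  have tj: "ereal t < x j" using t unfolding JJ_def by simp
  have "x j < x (j+1)" by (rule xlt[OF j])
  then have "ereal t < ereal s" using tj xs by (metis less_trans)
  then have ts: "s \<in> {t<..}" by simp
  have "WJ j \<le> W t s" unfolding WJ_def W_def
  proof (rule set_mono_int, rule subsetI)
    fix y assume "y \<in> JJ x j"
    then have "x j \<le> ereal y" "ereal y < ereal s" using xs unfolding JJ_def by auto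
    moreover have "ereal t < ereal y" using tj \<open>x j \<le> ereal y\<close> by (rule less_le_trans)
    ultimately show "y \<in> {t<..<s}" by simp
  qed
  moreover have "H' j = H s" unfolding H'_def H_def using xs by (simp add: greaterThan_def)
  ultimately have "H' j powe r * WJ j powe p \<le> W t s powe p * H s powe r"
    using p r by (auto simp: mult.commute intro!: mult_left_mono powe_mono)
  also have "\<dots> \<le> G t" unfolding G_def using ts by (rule SUP_upper)
  finally show ?thesis .
qed

lemma C6: "(\<integral>\<^sup>+ j. ennreal (2 powi j) * (H' j powe r * WJ j powe p) \<partial>count_space Z) \<le> 2 * Ss"
proof -
  have "(\<integral>\<^sup>+ j. ennreal (2 powi j) * (H' j powe r * WJ j powe p) \<partial>count_space Z)
     = (\<integral>\<^sup>+ j. 2 * (\<integral>\<^sup>+ t. H' j powe r * WJ j powe p * (ennreal (u t) * indicator (JJ x (j-1)) t) \<partial>lborel) \<partial>count_space Z)"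
  proof (intro nn_integral_cong)
    fix j assume "j \<in> space (count_space Z)"
    then have j: "j \<in> Z" by simp
    have "(\<integral>\<^sup>+ t. H' j powe r * WJ j powe p * (ennreal (u t) * indicator (JJ x (j-1)) t) \<partial>lborel)
          = H' j powe r * WJ j powe p * (\<integral>\<^sup>+ t\<in>JJ x (j-1). ennreal (u t) \<partial>lborel)"
      by (simp add: nn_integral_cmult)
    then show "ennreal (2 powi j) * (H' j powe r * WJ j powe p) = 2 * (\<integral>\<^sup>+ t. H' j powe r * WJ j powe p * (ennreal (u t) * indicator (JJ x (j-1)) t) \<partial>lborel)"
      using uJ_eq[OF j] two_pow[of j] by (simp add: mult_ac)
  qed
  also have "\<dots> = 2 * (\<integral>\<^sup>+ j. (\<integral>\<^sup>+ t. H' j powe r * WJ j powe p * (ennreal (u t) * indicator (JJ x (j-1)) t) \<partial>lborel) \<partial>count_space Z)"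
    by (rule nn_integral_cmult) simp
  also have "\<dots> \<le> 2 * (\<integral>\<^sup>+ t. ennreal (u t) * G t * indicator {0<..} t \<partial>lborel)"
  proof (intro mult_left_mono sum_disj_le)
    fix y i j assume ij: "i \<in> Z" "j \<in> Z" "i \<noteq> j"
    then have "i - 1 \<in> Z" "j - 1 \<in> Z" "i - 1 \<noteq> j - 1" using Zdown by auto
    then show "H' i powe r * WJ i powe p * (ennreal (u y) * indicator (JJ x (i-1)) y) = 0 \<or>
               H' j powe r * WJ j powe p * (ennreal (u y) * indicator (JJ x (j-1)) y) = 0"
      using JJ_disj by (auto split: split_indicator)
  next
    fix y i assume i: "i \<in> Z"
    then have i1: "i - 1 \<in> Z" using Zdown by auto
    show "H' i powe r * WJ i powe p * (ennreal (u y) * indicator (JJ x (i-1)) y) \<le> ennreal (u y) * G y * indicator {0<..} y"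
    proof (cases "y \<in> JJ x (i-1)")
      case True
      then have "0 < y" using JJ_pos[OF i1] by simp
      then show ?thesis using True c_le_G[OF i True]
        by (auto simp: mult_ac intro!: mult_left_mono)
    qed simp
  qed auto
  also have "\<dots> = 2 * Ss" unfolding Ss_def by (simp add: mult_ac)
  finally show ?thesis .
qed


definition "k1 = gK p * 2 powr r * 2 powr p * 2"

lemma L_upper: "L \<le> ennreal k1 * (Bs + Ss)"
proof -
  have "L \<le> (\<integral>\<^sup>+ k. (\<integral>\<^sup>+ y. F y powe p * ennreal (u y) * indicator (JJ x k) y \<partial>lborel) \<partial>count_space Z)"
    by (rule C1)
  also have "\<dots> \<le> (\<integral>\<^sup>+ k. ennreal (2 powi k) * (\<integral>\<^sup>+j. a j \<partial>count_space {j\<in>Z. k \<le> j}) powe p \<partial>count_space Z)"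
  proof (intro nn_integral_mono)
    fix k assume "k \<in> space (count_space Z)"
    then have k: "k \<in> Z" by simp
    have "(\<integral>\<^sup>+ y. F y powe p * ennreal (u y) * indicator (JJ x k) y \<partial>lborel) \<le> ennreal (2 powi k) * F (xr k) powe p"
      by (rule C2[OF k])
    also have "\<dots> \<le> ennreal (2 powi k) * (\<integral>\<^sup>+j. a j \<partial>count_space {j\<in>Z. k \<le> j}) powe p"
      by (intro mult_left_mono powe_mono C3 k p) simp
    finally show "(\<integral>\<^sup>+ y. F y powe p * ennreal (u y) * indicator (JJ x k) y \<partial>lborel) \<le> \<dots>" .
  qed
  also have "\<dots> \<le> ennreal (gK p) * (\<integral>\<^sup>+j. ennreal (2 powi j) * a j powe p \<partial>count_space Z)"
    by (rule geom_ineq[OF p])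
  also have "\<dots> \<le> ennreal (gK p) * (\<integral>\<^sup>+j. 2 powe r * 2 powe p * (ennreal (2 powi j) * b j powe p + ennreal (2 powi j) * (H' j powe r * WJ j powe p)) \<partial>count_space Z)"
  proof (intro mult_left_mono nn_integral_mono)
    fix j assume "j \<in> space (count_space Z)"
    then have j: "j \<in> Z" by simp
    have "ennreal (2 powi j) * a j powe p \<le> ennreal (2 powi j) * (2 powe r * (2 powe p * (b j powe p + H' j powe r * WJ j powe p)))"
      by (intro mult_left_mono C5 j) simp
    then show "ennreal (2 powi j) * a j powe p \<le> 2 powe r * 2 powe p * (ennreal (2 powi j) * b j powe p + ennreal (2 powi j) * (H' j powe r * WJ j powe p))"
      by (simp add: distrib_left mult_ac)
  qed simp
  also have "\<dots> = ennreal (gK p) * (2 powe r * 2 powe p) * (Bs + (\<integral>\<^sup>+ j. ennreal (2 powi j) * (H' j powe r * WJ j powe p) \<partial>count_space Z))"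
    unfolding Bs_eq by (simp add: nn_integral_cmult nn_integral_add mult_ac)
  also have "\<dots> \<le> ennreal (gK p) * (2 powe r * 2 powe p) * (Bs + 2 * Ss)"
    by (intro mult_left_mono add_left_mono C6) simp
  also have "\<dots> \<le> ennreal (gK p) * (2 powe r * 2 powe p) * (2 * (Bs + Ss))"
  proof (intro mult_left_mono)
    show "Bs + 2 * Ss \<le> 2 * (Bs + Ss)"
      by (simp add: distrib_left mult_2 add_mono add.assoc)
  qed simp
  also have "\<dots> = ennreal k1 * (Bs + Ss)"
  proof -
    have "2 powe r = ennreal (2 powr r)" "2 powe p = ennreal (2 powr p)"
      using powe_ennreal[of 2] by (metis ennreal_numeral zero_le_numeral)+
    moreover have "0 \<le> gK p" using gK_pos[OF p] by simp
    ultimately have "ennreal k1 = ennreal (gK p) * (2 powe r * 2 powe p) * 2"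
      unfolding k1_def by (simp add: ennreal_mult mult.assoc)
    then show ?thesis by (simp only: mult.assoc)
  qed
  finally show ?thesis .
qed


lemma main_result:
  "L powe (1/r) \<le> ennreal (max ((k1 powr (1/r)) * 2 powr (1/r)) (2 powr (1/r) + 1)) * (Bs powe (1/r) + Ss powe (1/r)) \<and>
   Bs powe (1/r) + Ss powe (1/r) \<le> ennreal (max ((k1 powr (1/r)) * 2 powr (1/r)) (2 powr (1/r) + 1)) * L powe (1/r)"
proof
  have r1: "0 < 1/r" using r by simp
  have k1pos: "0 \<le> k1" unfolding k1_def using gK_pos[OF p] by simp
  have two: "(2::ennreal) powe (1/r) = ennreal (2 powr (1/r))"
    using powe_ennreal[of 2] by (metis ennreal_numeral zero_le_numeral)
  have "L powe (1/r) \<le> (ennreal k1 * (Bs + Ss)) powe (1/r)"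
    using L_upper r1 by (rule powe_mono)
  also have "\<dots> = ennreal (k1 powr (1/r)) * (Bs + Ss) powe (1/r)"
    using r1 k1pos by (simp add: powe_mult powe_ennreal)
  also have "\<dots> \<le> ennreal (k1 powr (1/r)) * (2 powe (1/r) * (Bs powe (1/r) + Ss powe (1/r)))"
    by (intro mult_left_mono powe_add_le r1) simp
  also have "\<dots> = ennreal ((k1 powr (1/r)) * 2 powr (1/r)) * (Bs powe (1/r) + Ss powe (1/r))"
    unfolding two by (simp add: ennreal_mult mult.assoc)
  also have "\<dots> \<le> ennreal (max ((k1 powr (1/r)) * 2 powr (1/r)) (2 powr (1/r) + 1)) * (Bs powe (1/r) + Ss powe (1/r))"
    by (intro mult_right_mono ennreal_leI) auto
  finally show "L powe (1/r) \<le> ennreal (max ((k1 powr (1/r)) * 2 powr (1/r)) (2 powr (1/r) + 1)) * (Bs powe (1/r) + Ss powe (1/r))" .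
next
  have r1: "0 < 1/r" using r by simp
  have two: "(2::ennreal) powe (1/r) = ennreal (2 powr (1/r))"
    using powe_ennreal[of 2] by (metis ennreal_numeral zero_le_numeral)
  have "Bs powe (1/r) \<le> (2 * L) powe (1/r)" using B_le r1 by (rule powe_mono)
  also have "\<dots> = ennreal (2 powr (1/r)) * L powe (1/r)" using r1 two by (simp add: powe_mult)
  finally have b: "Bs powe (1/r) \<le> ennreal (2 powr (1/r)) * L powe (1/r)" .
  have s: "Ss powe (1/r) \<le> L powe (1/r)" using S_le_L r1 by (rule powe_mono)
  have "Bs powe (1/r) + Ss powe (1/r) \<le> ennreal (2 powr (1/r)) * L powe (1/r) + 1 * L powe (1/r)"
    using b s by (intro add_mono) auto
  also have "\<dots> = ennreal (2 powr (1/r) + 1) * L powe (1/r)"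
    by (simp add: distrib_right ennreal_plus)
  also have "\<dots> \<le> ennreal (max ((k1 powr (1/r)) * 2 powr (1/r)) (2 powr (1/r) + 1)) * L powe (1/r)"
    by (intro mult_right_mono ennreal_leI) auto
  finally show "Bs powe (1/r) + Ss powe (1/r) \<le> ennreal (max ((k1 powr (1/r)) * 2 powr (1/r)) (2 powr (1/r) + 1)) * L powe (1/r)" .
qed

lemma k1_eq: "k1 = gK (r/q) * 2 powr r * 2 powr (r/q) * 2" unfolding k1_def p_def ..

lemma final:
  "let
        LHS = (\<integral>\<^sup>+ y\<in>{0<..}.
                 ((\<integral>\<^sup>+ t\<in>{y<..}. ((\<integral>\<^sup>+ s\<in>{t<..}. ennreal (h s) \<partial>lborel) powe q) * ennreal (w t) \<partial>lborel) powe (r / q))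
                 * ennreal (u y) \<partial>lborel) powe (1 / r);
        B = (\<integral>\<^sup>+ k. (ennreal (2 powr (real_of_int k / r)) *
                 ((\<integral>\<^sup>+ s\<in>{s. x k < ereal s \<and> ereal s < x (k + 1)}.
                     ((\<integral>\<^sup>+ \<tau>\<in>{\<tau>. s < \<tau> \<and> ereal \<tau> < x (k + 1)}. ennreal (h \<tau>) \<partial>lborel) powe q) * ennreal (w s) \<partial>lborel)
                   powe (1 / q))) powe r \<partial>count_space Z) powe (1 / r);
        S = (\<integral>\<^sup>+ t\<in>{0<..}. ennreal (u t) *
                 (SUP s\<in>{t<..}. ((\<integral>\<^sup>+ \<tau>\<in>{t<..<s}. ennreal (w \<tau>) \<partial>lborel) powe (r / q)) *
                                 ((\<integral>\<^sup>+ \<tau>\<in>{s<..}. ennreal (h \<tau>) \<partial>lborel) powe r)) \<partial>lborel) powe (1 / r)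
      in LHS \<le> ennreal (max (((gK (r/q) * 2 powr r * 2 powr (r/q) * 2) powr (1/r)) * 2 powr (1/r)) (2 powr (1/r) + 1)) * (B + S) \<and>
         B + S \<le> ennreal (max (((gK (r/q) * 2 powr r * 2 powr (r/q) * 2) powr (1/r)) * 2 powr (1/r)) (2 powr (1/r) + 1)) * LHS"
  unfolding Let_def
  using main_result unfolding k1_eq L_def F_def H_def Bs_def b_def h1_def Ss_def G_def W_def p_def .

end

theorem lemma4p4:
  fixes q r :: real
  assumes "0 < q" and "0 < r"
  shows "\<exists>C>0. \<forall>u v w Z x h.
     is_weight u \<and> is_weight v \<and> is_weight w \<and> covering_seq u Z x \<and> nonneg_meas h \<longrightarrow>
     (let
        LHS = (\<integral>\<^sup>+ y\<in>{0<..}.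
                 ((\<integral>\<^sup>+ t\<in>{y<..}. ((\<integral>\<^sup>+ s\<in>{t<..}. ennreal (h s) \<partial>lborel) powe q) * ennreal (w t) \<partial>lborel) powe (r / q))
                 * ennreal (u y) \<partial>lborel) powe (1 / r);
        B = (\<integral>\<^sup>+ k. (ennreal (2 powr (real_of_int k / r)) *
                 ((\<integral>\<^sup>+ s\<in>{s. x k < ereal s \<and> ereal s < x (k + 1)}.
                     ((\<integral>\<^sup>+ \<tau>\<in>{\<tau>. s < \<tau> \<and> ereal \<tau> < x (k + 1)}. ennreal (h \<tau>) \<partial>lborel) powe q) * ennreal (w s) \<partial>lborel)
                   powe (1 / q))) powe r \<partial>count_space Z) powe (1 / r);
        S = (\<integral>\<^sup>+ t\<in>{0<..}. ennreal (u t) *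
                 (SUP s\<in>{t<..}. ((\<integral>\<^sup>+ \<tau>\<in>{t<..<s}. ennreal (w \<tau>) \<partial>lborel) powe (r / q)) *
                                 ((\<integral>\<^sup>+ \<tau>\<in>{s<..}. ennreal (h \<tau>) \<partial>lborel) powe r)) \<partial>lborel) powe (1 / r)
      in LHS \<le> ennreal C * (B + S) \<and> B + S \<le> ennreal C * LHS)"
proof (intro exI[of _ "max (((gK (r/q) * 2 powr r * 2 powr (r/q) * 2) powr (1/r)) * 2 powr (1/r)) (2 powr (1/r) + 1)"] conjI allI impI)
  show "0 < max (((gK (r/q) * 2 powr r * 2 powr (r/q) * 2) powr (1/r)) * 2 powr (1/r)) (2 powr (1/r) + 1)"
    by (simp add: max.strict_coboundedI2 add_pos_pos)
next
  fix u v w :: "real \<Rightarrow> real" and Z x h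
  assume H: "is_weight u \<and> is_weight v \<and> is_weight w \<and> covering_seq u Z x \<and> nonneg_meas h"
  interpret mainl u Z x w h q r
    using H assms by unfold_locales auto
  show "let
        LHS = (\<integral>\<^sup>+ y\<in>{0<..}.
                 ((\<integral>\<^sup>+ t\<in>{y<..}. ((\<integral>\<^sup>+ s\<in>{t<..}. ennreal (h s) \<partial>lborel) powe q) * ennreal (w t) \<partial>lborel) powe (r / q))
                 * ennreal (u y) \<partial>lborel) powe (1 / r);
        B = (\<integral>\<^sup>+ k. (ennreal (2 powr (real_of_int k / r)) *
                 ((\<integral>\<^sup>+ s\<in>{s. x k < ereal s \<and> ereal s < x (k + 1)}.
                     ((\<integral>\<^sup>+ \<tau>\<in>{\<tau>. s < \<tau> \<and> ereal \<tau> < x (k + 1)}. ennreal (h \<tau>) \<partial>lborel) powe q) * ennreal (w s) \<partial>lborel)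
                   powe (1 / q))) powe r \<partial>count_space Z) powe (1 / r);
        S = (\<integral>\<^sup>+ t\<in>{0<..}. ennreal (u t) *
                 (SUP s\<in>{t<..}. ((\<integral>\<^sup>+ \<tau>\<in>{t<..<s}. ennreal (w \<tau>) \<partial>lborel) powe (r / q)) *
                                 ((\<integral>\<^sup>+ \<tau>\<in>{s<..}. ennreal (h \<tau>) \<partial>lborel) powe r)) \<partial>lborel) powe (1 / r)
      in LHS \<le> ennreal (max (((gK (r/q) * 2 powr r * 2 powr (r/q) * 2) powr (1/r)) * 2 powr (1/r)) (2 powr (1/r) + 1)) * (B + S) \<and>
         B + S \<le> ennreal (max (((gK (r/q) * 2 powr r * 2 powr (r/q) * 2) powr (1/r)) * 2 powr (1/r)) (2 powr (1/r) + 1)) * LHS"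
    by (rule final)
qed


end
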